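(* For every countable two-sorted ultrametric space $X$ there is a uniformly continuous dc-embedding $e\colon X\to\mathbb U$.
   Context: A two-sorted ultrametric space is $(X,d_X,D_X)$ with $D_X$ a linear order with least element $0$, $d_X\colon X\times X\to D_X$ symmetric, $d_X(x,y)=0\iff x=y$, $d_X(x,z)\le\max\{d_X(x,y),d_X(y,z)\}$; countable means both $X$ and $D_X$ are countable. A dc-embedding $f\colon X\to Y$ is an injection on points with an order embedding $D_f\colon D_X\to D_Y$ fixing $0$ such that $d_Y(f(x),f(x'))=D_f(d_X(x,x'))$. The uniformity of $X$ is generated by the partitions $\{B_r(a):a\in X\}$, $B_r(a)=\{x:d(x,a)<r\}$, $r\in D_X\setminus\{0\}$; uniform continuity is with respect to these uniformities. $\mathbb U$ is the countable rational Urysohn ultrametric space (the unique countable ultrametric space with distances in $\mathbb Q_{\ge0}$ that is universal for finite rational ultrametric spaces and in which every isometry between finite subsets extends to a global isometry), viewed as a two-sorted space with distance set $\mathbb Q_{\ge0}$; equivalently the Fraïssé limit of finite two-sorted ultrametric spaces with dc-embeddings. *)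

theory Defs
  imports "HOL-Library.Countable_Set" HOL.Rat
begin

text \<open>A two-sorted ultrametric space: point carrier X, distance carrier D (a subset of a
linearly ordered type, with the induced order), least element z (the distance 0), distance d.\<close>
definition ts_ultrametric :: "'a set \<Rightarrow> 'd::linorder set \<Rightarrow> 'd \<Rightarrow> ('a \<Rightarrow> 'a \<Rightarrow> 'd) \<Rightarrow> bool" where
  "ts_ultrametric X D z d \<longleftrightarrow>
     z \<in> D \<and> (\<forall>r\<in>D. z \<le> r) \<and>
     (\<forall>x\<in>X. \<forall>y\<in>X. d x y \<in> D \<and> d x y = d y x \<and> (d x y = z \<longleftrightarrow> x = y)) \<and>
     (\<forall>x\<in>X. \<forall>y\<in>X. \<forall>w\<in>X. d x w \<le> max (d x y) (d y w))"

definition countable_ts_ultrametric :: "'a set \<Rightarrow> 'd::linorder set \<Rightarrow> 'd \<Rightarrow> ('a \<Rightarrow> 'a \<Rightarrow> 'd) \<Rightarrow> bool" where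
  "countable_ts_ultrametric X D z d \<longleftrightarrow> ts_ultrametric X D z d \<and> countable X \<and> countable D"

definition dc_embedding ::
  "'a set \<Rightarrow> 'd::linorder set \<Rightarrow> 'd \<Rightarrow> ('a \<Rightarrow> 'a \<Rightarrow> 'd) \<Rightarrow>
   'b set \<Rightarrow> 'e::linorder set \<Rightarrow> 'e \<Rightarrow> ('b \<Rightarrow> 'b \<Rightarrow> 'e) \<Rightarrow>
   ('a \<Rightarrow> 'b) \<Rightarrow> ('d \<Rightarrow> 'e) \<Rightarrow> bool" where
  "dc_embedding X D z d Y E zE dY f Df \<longleftrightarrow>
     inj_on f X \<and> f ` X \<subseteq> Y \<and>
     Df ` D \<subseteq> E \<and> (\<forall>r\<in>D. \<forall>s\<in>D. r < s \<longrightarrow> Df r < Df s) \<and> Df z = zE \<and>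
     (\<forall>x\<in>X. \<forall>x'\<in>X. dY (f x) (f x') = Df (d x x'))"

text \<open>The entourage associated with the partition into open balls of radius r.\<close>
definition ball_entourage :: "'a set \<Rightarrow> ('a \<Rightarrow> 'a \<Rightarrow> 'd::linorder) \<Rightarrow> 'd \<Rightarrow> ('a \<times> 'a) set" where
  "ball_entourage X d r = {(x, y). x \<in> X \<and> y \<in> X \<and> d x y < r}"

definition ts_uniformity :: "'a set \<Rightarrow> 'd::linorder set \<Rightarrow> 'd \<Rightarrow> ('a \<Rightarrow> 'a \<Rightarrow> 'd) \<Rightarrow> ('a \<times> 'a) set set" where
  "ts_uniformity X D z d =
     {V. V \<subseteq> X \<times> X \<and> (\<exists>F. finite F \<and> F \<subseteq> D - {z} \<and>
            (X \<times> X) \<inter> (\<Inter>r\<in>F. ball_entourage X d r) \<subseteq> V)}"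

definition ts_uniformly_continuous ::
  "'a set \<Rightarrow> 'd::linorder set \<Rightarrow> 'd \<Rightarrow> ('a \<Rightarrow> 'a \<Rightarrow> 'd) \<Rightarrow>
   'b set \<Rightarrow> 'e::linorder set \<Rightarrow> 'e \<Rightarrow> ('b \<Rightarrow> 'b \<Rightarrow> 'e) \<Rightarrow> ('a \<Rightarrow> 'b) \<Rightarrow> bool" where
  "ts_uniformly_continuous X D z d Y E zE dY f \<longleftrightarrow>
     (\<forall>V \<in> ts_uniformity Y E zE dY.
        {(x, x'). x \<in> X \<and> x' \<in> X \<and> (f x, f x') \<in> V} \<in> ts_uniformity X D z d)"

definition rat_ultrametric :: "'a set \<Rightarrow> ('a \<Rightarrow> 'a \<Rightarrow> rat) \<Rightarrow> bool" where
  "rat_ultrametric X d \<longleftrightarrow> ts_ultrametric X {q. 0 \<le> q} 0 d"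

text \<open>Characterisation of the countable rational Urysohn ultrametric space
(unique up to isometry): countable, rational ultrametric, universal for finite rational
ultrametric spaces (represented on subsets of nat), and ultrahomogeneous.\<close>
definition rational_urysohn_ultrametric :: "'u set \<Rightarrow> ('u \<Rightarrow> 'u \<Rightarrow> rat) \<Rightarrow> bool" where
  "rational_urysohn_ultrametric U du \<longleftrightarrow>
     countable U \<and> rat_ultrametric U du \<and>
     (\<forall>(F :: nat set) dF. finite F \<and> rat_ultrametric F dF \<longrightarrow>
        (\<exists>g. inj_on g F \<and> g ` F \<subseteq> U \<and> (\<forall>x\<in>F. \<forall>y\<in>F. du (g x) (g y) = dF x y))) \<and>
     (\<forall>A B h. finite A \<and> A \<subseteq> U \<and> B \<subseteq> U \<and> bij_betw h A B \<and>
        (\<forall>x\<in>A. \<forall>y\<in>A. du (h x) (h y) = du x y) \<longrightarrow>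
        (\<exists>g. bij_betw g U U \<and> (\<forall>x\<in>U. \<forall>y\<in>U. du (g x) (g y) = du x y) \<and> (\<forall>x\<in>A. g x = h x)))"

end

theory Submission
  imports Defs
begin

lemma ext_point:
  fixes U :: "'u set" and du :: "'u \<Rightarrow> 'u \<Rightarrow> rat" and a :: "'i \<Rightarrow> 'u"
  assumes UU: "rational_urysohn_ultrametric U du"
    and fI: "finite I" and aU: "a ` I \<subseteq> U"
    and rpos: "\<forall>i\<in>I. 0 < r i"
    and c1: "\<forall>i\<in>I. \<forall>j\<in>I. du (a i) (a j) \<le> max (r i) (r j)"
    and c2: "\<forall>i\<in>I. \<forall>j\<in>I. r i \<le> max (du (a i) (a j)) (r j)"
  shows "\<exists>u\<in>U. \<forall>i\<in>I. du u (a i) = r i"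
proof -
  have met: "ts_ultrametric U {q. 0 \<le> q} 0 du" using UU
    unfolding rational_urysohn_ultrametric_def rat_ultrametric_def by blast
  have nn: "\<And>x y. x \<in> U \<Longrightarrow> y \<in> U \<Longrightarrow> 0 \<le> du x y" using met unfolding ts_ultrametric_def by blast
  have sy: "\<And>x y. x \<in> U \<Longrightarrow> y \<in> U \<Longrightarrow> du x y = du y x" using met unfolding ts_ultrametric_def by blast
  have ze: "\<And>x y. x \<in> U \<Longrightarrow> y \<in> U \<Longrightarrow> du x y = 0 \<longleftrightarrow> x = y" using met unfolding ts_ultrametric_def by blast
  have um: "\<And>x y w. x \<in> U \<Longrightarrow> y \<in> U \<Longrightarrow> w \<in> U \<Longrightarrow> du x w \<le> max (du x y) (du y w)"
    using met unfolding ts_ultrametric_def by blast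
  define A where "A = a ` I"
  have fA: "finite A" using fI A_def by simp
  have AU: "A \<subseteq> U" using aU A_def by simp
  define rr where "rr y = r (SOME i. i \<in> I \<and> a i = y)" for y
  have rr: "rr (a i) = r i" if "i \<in> I" for i
  proof -
    have ex: "\<exists>j. j \<in> I \<and> a j = a i" using that by blast
    define j where "j = (SOME j. j \<in> I \<and> a j = a i)"
    have j: "j \<in> I" "a j = a i" using someI_ex[OF ex] j_def by auto
    have d0: "du (a i) (a j) = 0" using j aU that ze by auto
    have "r i \<le> max (du (a i) (a j)) (r j)" using c2 that j by blast
    moreover have "r j \<le> max (du (a j) (a i)) (r i)" using c2 that j by blast
    ultimately have "r i = r j" using d0 rpos that j by (auto simp: sy max_def split: if_splits)
    then show ?thesis unfolding rr_def j_def[symmetric] by simp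
  qed
  have rrpos: "\<forall>x\<in>A. 0 < rr x" using rr rpos A_def by auto
  have rc1: "\<forall>x\<in>A. \<forall>y\<in>A. du x y \<le> max (rr x) (rr y)" using rr c1 A_def by auto
  have rc2: "\<forall>x\<in>A. \<forall>y\<in>A. rr x \<le> max (du x y) (rr y)" using rr c2 A_def by auto
  define m where "m = card A"
  obtain \<nu> where \<nu>0: "bij_betw \<nu> {0..<m} A"
    using ex_bij_betw_nat_finite[OF fA] unfolding m_def by blast
  have \<nu>: "bij_betw \<nu> {..<m} A" using \<nu>0 by (simp add: atLeast0LessThan)
  have \<nu>A: "\<nu> i \<in> A" if "i < m" for i using \<nu> that bij_betwE by blast
  have \<nu>inj: "\<nu> i = \<nu> j \<longleftrightarrow> i = j" if "i < m" "j < m" for i j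
    using \<nu> that unfolding bij_betw_def inj_on_def by auto
  define dF where "dF i j = (if i < m \<and> j < m then du (\<nu> i) (\<nu> j)
      else if i < m \<and> j = m then rr (\<nu> i) else if i = m \<and> j < m then rr (\<nu> j) else 0)" for i j
  define F where "F = {..m}"
  have dF_ll: "dF i j = du (\<nu> i) (\<nu> j)" if "i < m" "j < m" for i j using that unfolding dF_def by simp
  have dF_lm: "dF i m = rr (\<nu> i)" if "i < m" for i using that unfolding dF_def by simp
  have dF_ml: "dF m j = rr (\<nu> j)" if "j < m" for j using that unfolding dF_def by simp
  have dF_mm: "dF m m = 0" unfolding dF_def by simp
  have nu1: "\<nu> i \<in> U" if "i < m" for i using \<nu>A AU that by blast
  have rrpos': "0 < rr (\<nu> i)" if "i < m" for i using rrpos \<nu>A that by blast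
  have rc1': "du (\<nu> i) (\<nu> j) \<le> max (rr (\<nu> i)) (rr (\<nu> j))" if "i < m" "j < m" for i j
    using rc1 \<nu>A that by blast
  have rc2': "rr (\<nu> i) \<le> max (du (\<nu> i) (\<nu> j)) (rr (\<nu> j))" if "i < m" "j < m" for i j
    using rc2 \<nu>A that by blast
  have "rat_ultrametric F dF"
    unfolding rat_ultrametric_def ts_ultrametric_def
  proof (intro conjI ballI)
    show "(0::rat) \<in> {q. 0 \<le> q}" by simp
    show "\<And>r. r \<in> {q. 0 \<le> q} \<Longrightarrow> (0::rat) \<le> r" by simp
  next
    fix x y assume xF: "x \<in> F" and yF: "y \<in> F"
    then have xm: "x \<le> m" and ym: "y \<le> m" unfolding F_def by auto
    have xc: "x < m \<or> x = m" and yc: "y < m \<or> y = m" using xm ym by auto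
    have p1: "0 \<le> dF x y" using xc yc
    proof (elim disjE)
      assume "x < m" "y < m" then show ?thesis using nn[OF nu1 nu1] dF_ll by simp
    next
      assume "x < m" "y = m" then show ?thesis using rrpos' dF_lm by (simp add: less_imp_le)
    next
      assume "x = m" "y < m" then show ?thesis using rrpos' dF_ml by (simp add: less_imp_le)
    next
      assume "x = m" "y = m" then show ?thesis using dF_mm by simp
    qed
    then show "dF x y \<in> {q. 0 \<le> q}" by simp
    show "dF x y = dF y x" using xc yc
    proof (elim disjE)
      assume "x < m" "y < m" then show ?thesis using sy[OF nu1 nu1] dF_ll by simp
    next
      assume "x < m" "y = m" then show ?thesis using dF_lm dF_ml by simp
    next
      assume "x = m" "y < m" then show ?thesis using dF_lm dF_ml by simp
    next
      assume "x = m" "y = m" then show ?thesis by simp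
    qed
    show "dF x y = 0 \<longleftrightarrow> x = y" using xc yc
    proof (elim disjE)
      assume "x < m" "y < m" then show ?thesis using ze[OF nu1 nu1] \<nu>inj dF_ll by simp
    next
      assume "x < m" "y = m" then show ?thesis using rrpos'[of x] dF_lm by simp
    next
      assume "x = m" "y < m" then show ?thesis using rrpos'[of y] dF_ml by simp
    next
      assume "x = m" "y = m" then show ?thesis using dF_mm by simp
    qed
  next
    fix x y w assume "x \<in> F" "y \<in> F" "w \<in> F"
    then have xc: "x < m \<or> x = m" and yc: "y < m \<or> y = m" and wc: "w < m \<or> w = m"
      unfolding F_def by auto
    show "dF x w \<le> max (dF x y) (dF y w)" using xc yc wc
    proof (elim disjE)
      assume "x < m" "y < m" "w < m" then show ?thesis
        using um[OF nu1 nu1 nu1] dF_ll by simp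
    next
      assume "x < m" "y < m" "w = m" then show ?thesis
        using rc2'[of x y] dF_ll dF_lm by simp
    next
      assume "x < m" "y = m" "w < m" then show ?thesis
        using rc1'[of x w] dF_ll dF_lm dF_ml by simp
    next
      assume "x < m" "y = m" "w = m" then show ?thesis
        using dF_lm dF_mm by simp
    next
      assume "x = m" "y < m" "w < m" then show ?thesis
        using rc2'[of w y] dF_ll dF_ml sy[OF nu1 nu1] by (simp add: max.commute)
    next
      assume "x = m" "y < m" "w = m" then show ?thesis
        using dF_mm dF_ml dF_lm rrpos'[of y] by simp
    next
      assume "x = m" "y = m" "w < m" then show ?thesis
        using dF_mm dF_ml by simp
    next
      assume "x = m" "y = m" "w = m" then show ?thesis
        using dF_mm by simp
    qed
  qed
  note rum = this
  have univ: "\<forall>(F :: nat set) dF. finite F \<and> rat_ultrametric F dF \<longrightarrow>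
        (\<exists>g. inj_on g F \<and> g ` F \<subseteq> U \<and> (\<forall>x\<in>F. \<forall>y\<in>F. du (g x) (g y) = dF x y))"
    using UU unfolding rational_urysohn_ultrametric_def by blast
  have finF: "finite F" unfolding F_def by simp
  have "\<exists>g. inj_on g F \<and> g ` F \<subseteq> U \<and> (\<forall>x\<in>F. \<forall>y\<in>F. du (g x) (g y) = dF x y)"
    using univ[rule_format, of F dF] finF rum by blast
  then obtain g where ginj: "inj_on g F" and gU: "g ` F \<subseteq> U"
      and giso: "\<forall>x\<in>F. \<forall>y\<in>F. du (g x) (g y) = dF x y" by blast
  define A' where "A' = g ` {..<m}"
  define h where "h y = \<nu> (the_inv_into {..<m} g y)" for y
  have ginj': "inj_on g {..<m}" using ginj unfolding F_def by (rule inj_on_subset) auto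
  have bg: "bij_betw g {..<m} A'" unfolding A'_def using ginj' by (rule inj_on_imp_bij_betw)
  have hg: "h (g i) = \<nu> i" if "i < m" for i
  proof -
    have "the_inv_into {..<m} g (g i) = i" using the_inv_into_f_f[OF ginj'] that by simp
    then show ?thesis unfolding h_def by simp
  qed
  have bh: "bij_betw h A' A"
  proof -
    have "bij_betw (\<nu> \<circ> the_inv_into {..<m} g) A' A"
      using bij_betw_trans[OF bij_betw_the_inv_into[OF bg] \<nu>] .
    then show ?thesis unfolding h_def comp_def by (simp add: h_def)
  qed
  have hiso: "\<forall>x\<in>A'. \<forall>y\<in>A'. du (h x) (h y) = du x y"
  proof (intro ballI)
    fix x y assume "x \<in> A'" "y \<in> A'"
    then obtain i j where ij: "i < m" "j < m" "x = g i" "y = g j" unfolding A'_def by auto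
    have "du (g i) (g j) = dF i j" using giso ij unfolding F_def by simp
    also have "\<dots> = du (\<nu> i) (\<nu> j)" using ij unfolding dF_def by simp
    finally show "du (h x) (h y) = du x y" using hg ij by simp
  qed
  have A'U: "A' \<subseteq> U" using gU unfolding A'_def F_def by auto
  have finA': "finite A'" unfolding A'_def by simp
  have hom: "\<forall>A B h. finite A \<and> A \<subseteq> U \<and> B \<subseteq> U \<and> bij_betw h A B \<and>
        (\<forall>x\<in>A. \<forall>y\<in>A. du (h x) (h y) = du x y) \<longrightarrow>
        (\<exists>g. bij_betw g U U \<and> (\<forall>x\<in>U. \<forall>y\<in>U. du (g x) (g y) = du x y) \<and> (\<forall>x\<in>A. g x = h x))"
    using UU unfolding rational_urysohn_ultrametric_def by (elim conjE) assumption
  have "\<exists>g. bij_betw g U U \<and> (\<forall>x\<in>U. \<forall>y\<in>U. du (g x) (g y) = du x y) \<and> (\<forall>x\<in>A'. g x = h x)"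
    by (rule hom[THEN spec[of _ A'], THEN spec[of _ A], THEN spec[of _ h], THEN mp]) (intro conjI finA' A'U AU bh hiso)
  then obtain \<phi> where \<phi>: "bij_betw \<phi> U U" and \<phi>iso: "\<forall>x\<in>U. \<forall>y\<in>U. du (\<phi> x) (\<phi> y) = du x y"
      and \<phi>h: "\<forall>x\<in>A'. \<phi> x = h x" by blast
  have gmU: "g m \<in> U" using gU unfolding F_def by auto
  show ?thesis
  proof (intro bexI ballI)
    show "\<phi> (g m) \<in> U" using \<phi> gmU bij_betwE by blast
    fix i assume iI: "i \<in> I"
    then have "a i \<in> A" unfolding A_def by simp
    then obtain k where k: "k < m" "\<nu> k = a i" using \<nu> unfolding bij_betw_def by auto
    have gkU: "g k \<in> U" using gU k unfolding F_def by auto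
    have "\<phi> (g k) = a i" using \<phi>h hg k unfolding A'_def by auto
    then have "du (\<phi> (g m)) (a i) = du (\<phi> (g m)) (\<phi> (g k))" by simp
    also have "\<dots> = du (g m) (g k)" using \<phi>iso gmU gkU by blast
    also have "\<dots> = dF m k" using giso k unfolding F_def by auto
    also have "\<dots> = rr (a i)" using k unfolding dF_def by simp
    also have "\<dots> = r i" using rr iI by simp
    finally show "du (\<phi> (g m)) (a i) = r i" .
  qed
qed


function gf :: "(nat \<Rightarrow> (nat \<Rightarrow> 'b) \<Rightarrow> 'b \<Rightarrow> bool) \<Rightarrow> nat \<Rightarrow> 'b" where
  "gf Q n = (SOME v. Q n (\<lambda>i. if i < n then gf Q i else undefined) v)"
  by pat_completeness auto
termination by (relation "measure snd") auto

declare gf.simps[simp del]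

lemma gf_induct:
  assumes "\<And>n. (\<And>i. i < n \<Longrightarrow> P i (gf Q i)) \<Longrightarrow>
      \<exists>v. Q n (\<lambda>i. if i < n then gf Q i else undefined) v"
    and "\<And>n v. (\<And>i. i < n \<Longrightarrow> P i (gf Q i)) \<Longrightarrow>
      Q n (\<lambda>i. if i < n then gf Q i else undefined) v \<Longrightarrow> P n v"
  shows "P n (gf Q n)"
proof (induction n rule: less_induct)
  case (less n)
  have "\<exists>v. Q n (\<lambda>i. if i < n then gf Q i else undefined) v" using assms(1) less by blast
  then have "Q n (\<lambda>i. if i < n then gf Q i else undefined) (gf Q n)"
    by (subst gf.simps) (rule someI_ex)
  then show ?case using assms(2) less by blast
qed

lemma rat_gap:
  fixes L H :: "rat set" and b :: rat
  assumes "finite L" "finite H" "\<forall>l\<in>L. 0<l" "\<forall>h\<in>H. 0<h" "\<forall>l\<in>L.\<forall>h\<in>H. l<h" "0<b"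
  shows "\<exists>v. 0<v \<and> (\<forall>l\<in>L. l<v) \<and> (\<forall>h\<in>H. v<h) \<and> (L={} \<longrightarrow> v<b)"
proof -
  define lo where "lo = (if L = {} then 0 else Max L)"
  define hi where "hi = (if H = {} then lo + 1 else Min H)"
  define hi' where "hi' = (if L = {} then min hi b else hi)"
  have lo0: "0 \<le> lo"
  proof (cases "L = {}")
    case False
    then have "Max L \<in> L" using assms by simp
    then have "0 < Max L" using assms(3) by blast
    then show ?thesis using False unfolding lo_def by simp
  qed (simp add: lo_def)
  have loL: "\<forall>l\<in>L. l \<le> lo" using assms unfolding lo_def by auto
  have hiH: "\<forall>h\<in>H. hi \<le> h" using assms unfolding hi_def by auto
  have lohi: "lo < hi"
  proof (cases "H = {}")
    case True then show ?thesis unfolding hi_def by simp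
  next
    case False
    show ?thesis
    proof (cases "L = {}")
      case True then show ?thesis using False assms unfolding lo_def hi_def by auto
    next
      case False2: False
      have "Max L \<in> L" using False2 assms by simp
      moreover have "Min H \<in> H" using False assms by simp
      ultimately show ?thesis using False False2 assms unfolding lo_def hi_def by auto
    qed
  qed
  have lohi': "lo < hi'"
  proof (cases "L = {}")
    case True then have "lo = 0" unfolding lo_def by simp
    then show ?thesis using True lohi assms(6) unfolding hi'_def by simp
  next
    case False then show ?thesis using lohi unfolding hi'_def by simp
  qed
  define v where "v = (lo + hi') / 2"
  have "lo < v" "v < hi'" using lohi' unfolding v_def by auto
  moreover have "hi' \<le> hi" unfolding hi'_def by auto
  ultimately show ?thesis using lo0 loL hiH unfolding hi'_def
    by (intro exI[of _ v]) (auto split: if_splits)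
qed


lemma De_exists:
  fixes D :: "'d::linorder set" and z :: 'd
  assumes zD: "z \<in> D" and zmin: "\<forall>r\<in>D. z \<le> r" and cD: "countable D"
  shows "\<exists>De::'d \<Rightarrow> rat. De z = 0 \<and> (\<forall>r\<in>D. \<forall>s\<in>D. r < s \<longrightarrow> De r < De s) \<and>
     (\<forall>r>0. (\<exists>s\<in>D. z < s \<and> (\<forall>t\<in>D. t < s \<longrightarrow> De t < r)) \<or> (\<forall>t\<in>D. t = z))"
proof -
  define T where "T = D - {z}"
  have cT: "countable T" using cD unfolding T_def by simp
  define tn where "tn = to_nat_on T"
  define tt where "tt = from_nat_into T"
  define NT where "NT = tn ` T"
  have tt_tn: "tt (tn t) = t" if "t \<in> T" for t
    using from_nat_into_to_nat_on[OF cT that] unfolding tt_def tn_def .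
  have tnT: "tn t \<in> NT" if "t \<in> T" for t using that unfolding NT_def by simp
  have ttT: "tt n \<in> T" if "n \<in> NT" for n using that tt_tn unfolding NT_def by auto
  have tn_tt: "tn (tt n) = n" if "n \<in> NT" for n
    using to_nat_on_from_nat_into[of n T] that unfolding NT_def tn_def tt_def by simp
  have ttinj: "i = n" if "i \<in> NT" "n \<in> NT" "tt i = tt n" for i n
    using tn_tt that by metis
  define Q where "Q n f v = (n \<in> NT \<longrightarrow> 0 < v \<and>
      (\<forall>i<n. i \<in> NT \<longrightarrow> (tt i < tt n \<longrightarrow> f i < v) \<and> (tt n < tt i \<longrightarrow> v < f i)) \<and>
      ((\<forall>i<n. i \<in> NT \<longrightarrow> \<not> tt i < tt n) \<longrightarrow> v < 1 / (of_nat n + 1)))"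
    for n :: nat and f :: "nat \<Rightarrow> rat" and v :: rat
  have Qiff: "Q n f v \<longleftrightarrow> (n \<in> NT \<longrightarrow> 0 < v \<and>
      (\<forall>i<n. i \<in> NT \<longrightarrow> (tt i < tt n \<longrightarrow> f i < v) \<and> (tt n < tt i \<longrightarrow> v < f i)) \<and>
      ((\<forall>i<n. i \<in> NT \<longrightarrow> \<not> tt i < tt n) \<longrightarrow> v < 1 / (of_nat n + 1)))" for n f v unfolding Q_def by (rule refl)
  define val where "val = gf Q"
  have Qr: "Q n (\<lambda>i. if i < n then f i else undefined) v = Q n f v" for n f v
    unfolding Qiff by auto
  have inv: "Q n val (val n)" for n
    unfolding val_def
  proof (rule gf_induct[where P = "\<lambda>n v. Q n (gf Q) v"])
    fix n v
    assume "Q n (\<lambda>i. if i < n then gf Q i else undefined) v"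
    then show "Q n (gf Q) v" using Qr by simp
  next
    fix n
    assume IH: "\<And>i. i < n \<Longrightarrow> Q i (gf Q) (gf Q i)"
    show "\<exists>v. Q n (\<lambda>i. if i < n then gf Q i else undefined) v"
      unfolding Qr
    proof (cases "n \<in> NT")
      case False then show "\<exists>v. Q n (gf Q) v" unfolding Qiff by simp
    next
      case nT: True
      define L where "L = gf Q ` {i. i < n \<and> i \<in> NT \<and> tt i < tt n}"
      define H where "H = gf Q ` {i. i < n \<and> i \<in> NT \<and> tt n < tt i}"
      have pos: "0 < gf Q i" if "i < n" "i \<in> NT" for i using IH[OF that(1)] that(2) unfolding Qiff by blast
      have LH: "l < h" if lL: "l \<in> L" and hH: "h \<in> H" for l h
      proof -
        obtain i where i: "i < n" "i \<in> NT" "tt i < tt n" "l = gf Q i" using lL unfolding L_def by auto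
        obtain j where j: "j < n" "j \<in> NT" "tt n < tt j" "h = gf Q j" using hH unfolding H_def by auto
        have ij: "tt i < tt j" using i j by simp
        show ?thesis
        proof (cases "i < j")
          case True then show ?thesis using IH[OF j(1)] i j ij unfolding Qiff by blast
        next
          case False
          then have "j < i \<or> j = i" by auto
          then show ?thesis
          proof
            assume "j < i" then show ?thesis using IH[OF i(1)] i j ij unfolding Qiff by blast
          next
            assume "j = i" then show ?thesis using ij by simp
          qed
        qed
      qed
      have "\<exists>v. 0<v \<and> (\<forall>l\<in>L. l<v) \<and> (\<forall>h\<in>H. v<h) \<and> (L={} \<longrightarrow> v < 1 / (of_nat n + 1))"
        by (rule rat_gap) (use pos LH in \<open>auto simp: L_def H_def\<close>)
      then obtain v where v: "0<v" "\<forall>l\<in>L. l<v" "\<forall>h\<in>H. v<h" "L={} \<longrightarrow> v < 1 / (of_nat n + 1)" by blast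
      have "L = {}" if "\<forall>i<n. i \<in> NT \<longrightarrow> \<not> tt i < tt n" using that unfolding L_def by auto
      then have "Q n (gf Q) v"
      proof (intro Qiff[THEN iffD2] impI conjI allI)
        show "0 < v" by (rule v(1))
      next
        fix i assume "i < n" "i \<in> NT" "tt i < tt n"
        then show "gf Q i < v" using v(2) unfolding L_def by auto
      next
        fix i assume "i < n" "i \<in> NT" "tt n < tt i"
        then show "v < gf Q i" using v(3) unfolding H_def by auto
      next
        assume "\<forall>i<n. i \<in> NT \<longrightarrow> \<not> tt i < tt n" "\<forall>i<n. i \<in> NT \<longrightarrow> \<not> tt i < tt n \<Longrightarrow> L = {}"
        then show "v < 1 / (of_nat n + 1)" using v(4) by simp
      qed
      then show "\<exists>v. Q n (gf Q) v" by blast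
    qed
  qed
  define De where "De t = (if t = z then 0 else val (tn t))" for t
  have Tz: "t \<in> T \<longleftrightarrow> t \<in> D \<and> t \<noteq> z" for t unfolding T_def by auto
  have Dpos: "0 < De t" if "t \<in> T" for t
  proof -
    have "Q (tn t) val (val (tn t))" by (rule inv)
    then have "0 < val (tn t)" using tnT[OF that] unfolding Qiff by blast
    then show ?thesis using that Tz unfolding De_def by simp
  qed
  have smono: "De r < De s" if "r \<in> D" "s \<in> D" "r < s" for r s
  proof (cases "r = z")
    case True
    have "s \<noteq> z" using True that by simp
    then show ?thesis using Dpos[of s] Tz that True unfolding De_def by simp
  next
    case False
    have sz: "s \<noteq> z" using zmin that by force
    have rT: "r \<in> T" and sT: "s \<in> T" using False sz that Tz by auto
    define i where "i = tn r"
    define j where "j = tn s"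
    have iN: "i \<in> NT" and jN: "j \<in> NT" using rT sT tnT i_def j_def by auto
    have ti: "tt i = r" and tj: "tt j = s" using tt_tn rT sT i_def j_def by auto
    have "i \<noteq> j" using ti tj that by auto
    then have "val i < val j"
    proof (cases "i < j")
      case True then show ?thesis using inv[of j] iN jN ti tj that unfolding Qiff by blast
    next
      case False
      then have "j < i" using \<open>i \<noteq> j\<close> by simp
      then show ?thesis using inv[of i] iN jN ti tj that unfolding Qiff by blast
    qed
    then show ?thesis using False sz unfolding De_def i_def j_def by simp
  qed
  have cont: "(\<exists>s\<in>D. z < s \<and> (\<forall>t\<in>D. t < s \<longrightarrow> De t < r)) \<or> (\<forall>t\<in>D. t = z)" if r0: "0 < r" for r
  proof (cases "T = {}")
    case True then show ?thesis using Tz by auto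
  next
    case Tne: False
    show ?thesis
    proof (cases "\<exists>m0\<in>T. \<forall>t\<in>T. m0 \<le> t")
      case True
      then obtain m0 where m0: "m0 \<in> T" "\<forall>t\<in>T. m0 \<le> t" by blast
      have "z < m0" using m0 zmin Tz by (metis order.not_eq_order_implies_strict)
      moreover have "De t < r" if "t \<in> D" "t < m0" for t
      proof -
        have "t = z" using that m0 Tz by (metis not_le)
        then show ?thesis using r0 unfolding De_def by simp
      qed
      ultimately show ?thesis using m0 Tz by blast
    next
      case nomin: False
      obtain n where n: "inverse (of_nat (Suc n)) < r" using reals_Archimedean[OF r0] by blast
      define S where "S = tt ` (NT \<inter> {..n})"
      have finS: "finite S" unfolding S_def by simp
      have ST: "S \<subseteq> T" unfolding S_def using ttT by auto
      have "\<exists>t\<in>T. \<forall>x\<in>S. t < x"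
      proof (cases "S = {}")
        case True then show ?thesis using Tne by auto
      next
        case False
        then have "Min S \<in> T" using finS ST Min_in by blast
        then obtain t where "t \<in> T" "t < Min S" using nomin by (metis not_le)
        then show ?thesis using finS by (metis Min_le less_le_trans)
      qed
      then obtain t0 where t0: "t0 \<in> T" "\<forall>x\<in>S. t0 < x" by blast
      define PP where "PP k = (k \<in> NT \<and> (\<forall>i\<le>n. i \<in> NT \<longrightarrow> tt k < tt i))" for k
      have "PP (tn t0)" unfolding PP_def using t0 tnT tt_tn unfolding S_def by auto
      define m where "m = (LEAST k. PP k)"
      have Pm: "PP m" unfolding m_def by (rule LeastI) fact
      have mn: "n < m"
      proof (rule ccontr)
        assume "\<not> n < m" then have "m \<le> n" by simp
        then show False using Pm unfolding PP_def by auto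
      qed
      have rec: "\<forall>i<m. i \<in> NT \<longrightarrow> \<not> tt i < tt m"
      proof (intro allI impI notI)
        fix i assume i: "i < m" "i \<in> NT" "tt i < tt m"
        have "PP i" using Pm i unfolding PP_def by (meson less_trans)
        then have "m \<le> i" unfolding m_def by (rule Least_le)
        then show False using i by simp
      qed
      have mN: "m \<in> NT" using Pm unfolding PP_def by simp
      have "val m < 1 / (of_nat m + 1)" using inv[of m] mN rec unfolding Qiff by blast
      also have "\<dots> \<le> 1 / (of_nat n + 1)" using mn by (simp add: frac_le)
      also have "\<dots> < r" using n by (simp add: inverse_eq_divide add.commute)
      finally have vm: "val m < r" .
      define s where "s = tt m"
      have sT: "s \<in> T" using ttT mN s_def by simp
      have Ds: "De s < r" using vm sT Tz tn_tt[OF mN] unfolding De_def s_def by simp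
      have "z < s" using sT Tz zmin by (metis order.not_eq_order_implies_strict)
      moreover have "De t < r" if "t \<in> D" "t < s" for t
        using smono[OF that(1) _ that(2)] sT Tz Ds by auto
      ultimately show ?thesis using sT Tz by blast
    qed
  qed
  show ?thesis
    by (rule exI[of _ De]) (use smono cont in \<open>auto simp: De_def\<close>)
qed


lemma emb_exists:
  fixes X :: "'a set" and D :: "'d::linorder set" and z :: 'd and d :: "'a \<Rightarrow> 'a \<Rightarrow> 'd"
    and U :: "'u set" and du :: "'u \<Rightarrow> 'u \<Rightarrow> rat" and De :: "'d \<Rightarrow> rat"
  assumes UU: "rational_urysohn_ultrametric U du" and XX: "countable_ts_ultrametric X D z d"
    and De0: "De z = 0" and Demono: "\<forall>r\<in>D. \<forall>s\<in>D. r < s \<longrightarrow> De r < De s"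
  shows "\<exists>e. inj_on e X \<and> e ` X \<subseteq> U \<and> (\<forall>x\<in>X. \<forall>x'\<in>X. du (e x) (e x') = De (d x x'))"
proof -
  have metX: "ts_ultrametric X D z d" and cX: "countable X"
    using XX unfolding countable_ts_ultrametric_def by auto
  have zD: "z \<in> D" and zmin: "\<forall>r\<in>D. z \<le> r" using metX unfolding ts_ultrametric_def by auto
  have dD: "\<And>x y. x \<in> X \<Longrightarrow> y \<in> X \<Longrightarrow> d x y \<in> D" using metX unfolding ts_ultrametric_def by blast
  have dsy: "\<And>x y. x \<in> X \<Longrightarrow> y \<in> X \<Longrightarrow> d x y = d y x" using metX unfolding ts_ultrametric_def by blast
  have dze: "\<And>x y. x \<in> X \<Longrightarrow> y \<in> X \<Longrightarrow> d x y = z \<longleftrightarrow> x = y" using metX unfolding ts_ultrametric_def by blast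
  have dum: "\<And>x y w. x \<in> X \<Longrightarrow> y \<in> X \<Longrightarrow> w \<in> X \<Longrightarrow> d x w \<le> max (d x y) (d y w)"
    using metX unfolding ts_ultrametric_def by blast
  have met: "ts_ultrametric U {q. 0 \<le> q} 0 du" using UU
    unfolding rational_urysohn_ultrametric_def rat_ultrametric_def by blast
  have sy: "\<And>x y. x \<in> U \<Longrightarrow> y \<in> U \<Longrightarrow> du x y = du y x" using met unfolding ts_ultrametric_def by blast
  have ze: "\<And>x y. x \<in> U \<Longrightarrow> y \<in> U \<Longrightarrow> du x y = 0 \<longleftrightarrow> x = y" using met unfolding ts_ultrametric_def by blast
  have Dle: "De a \<le> De b" if "a \<in> D" "b \<in> D" "a \<le> b" for a b
  proof (cases "a = b")
    case False then have "a < b" using that by simp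
    then show ?thesis using Demono that by (simp add: less_imp_le)
  qed simp
  have Dpos: "0 < De t" if "t \<in> D" "t \<noteq> z" for t
  proof -
    have "z < t" using zmin that by (simp add: order.not_eq_order_implies_strict)
    then show ?thesis using Demono zD that De0 by metis
  qed
  have Dmax: "De a \<le> max (De b) (De c)" if "a \<in> D" "b \<in> D" "c \<in> D" "a \<le> max b c" for a b c
  proof (cases "b \<le> c")
    case True then show ?thesis using that Dle[of a c] by (simp add: max_def)
  next
    case False then show ?thesis using that Dle[of a b] by (simp add: max_def)
  qed
  define tx where "tx = to_nat_on X"
  define px where "px = from_nat_into X"
  define NX where "NX = tx ` X"
  have px_tx: "px (tx t) = t" if "t \<in> X" for t
    using from_nat_into_to_nat_on[OF cX that] unfolding px_def tx_def .
  have txN: "tx t \<in> NX" if "t \<in> X" for t using that unfolding NX_def by simp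
  have pxX: "px n \<in> X" if "n \<in> NX" for n using that px_tx unfolding NX_def by auto
  have tx_px: "tx (px n) = n" if "n \<in> NX" for n
    using to_nat_on_from_nat_into[of n X] that unfolding NX_def tx_def px_def by simp
  define \<rho> where "\<rho> n i = De (d (px n) (px i))" for n i
  have \<rho>sym: "\<rho> i j = \<rho> j i" if "i \<in> NX" "j \<in> NX" for i j unfolding \<rho>_def using dsy pxX that by simp
  have \<rho>0: "\<rho> i i = 0" if "i \<in> NX" for i 
  proof -
    have "d (px i) (px i) = z" using dze pxX[OF that] by blast
    then show ?thesis unfolding \<rho>_def using De0 by simp
  qed
  have \<rho>pos: "0 < \<rho> n i" if "i \<in> NX" "n \<in> NX" "i \<noteq> n" for i n
  proof -
    have "px n \<noteq> px i" using that tx_px by metis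
    then have "d (px n) (px i) \<noteq> z" using dze pxX that by simp
    then show ?thesis unfolding \<rho>_def using Dpos dD pxX that by simp
  qed
  have \<rho>um1: "\<rho> i j \<le> max (\<rho> n i) (\<rho> n j)" if "i \<in> NX" "j \<in> NX" "n \<in> NX" for i j n
  proof -
    have "d (px i) (px j) \<le> max (d (px n) (px i)) (d (px n) (px j))"
      using dum[of "px i" "px n" "px j"] dsy pxX that by simp
    then show ?thesis unfolding \<rho>_def using Dmax dD pxX that by simp
  qed
  have \<rho>um2: "\<rho> n i \<le> max (\<rho> i j) (\<rho> n j)" if "i \<in> NX" "j \<in> NX" "n \<in> NX" for i j n
  proof -
    have "d (px n) (px i) \<le> max (d (px n) (px j)) (d (px i) (px j))"
      using dum[of "px n" "px j" "px i"] dsy pxX that by simp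
    then show ?thesis unfolding \<rho>_def using Dmax dD pxX that by (simp add: max.commute)
  qed
  define Q where "Q n f u = (n \<in> NX \<longrightarrow> u \<in> U \<and> (\<forall>i<n. i \<in> NX \<longrightarrow> du u (f i) = \<rho> n i))"
    for n :: nat and f :: "nat \<Rightarrow> 'u" and u :: 'u
  have Qiff: "Q n f u \<longleftrightarrow> (n \<in> NX \<longrightarrow> u \<in> U \<and> (\<forall>i<n. i \<in> NX \<longrightarrow> du u (f i) = \<rho> n i))"
    for n f u unfolding Q_def by (rule refl)
  have Qr: "Q n (\<lambda>i. if i < n then f i else undefined) v = Q n f v" for n f v
    unfolding Qiff by auto
  have pw: "du (g i) (g j) = \<rho> i j"
    if "i \<in> NX" "j \<in> NX" "Q i g (g i)" "Q j g (g j)" for g i j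
  proof -
    have gi: "g i \<in> U" and gj: "g j \<in> U" using that Qiff by blast+
    consider "i < j" | "i = j" | "j < i" by linarith
    then show ?thesis
    proof cases
      case 1 then have "du (g j) (g i) = \<rho> j i" using that Qiff by blast
      then show ?thesis using sy[OF gi gj] \<rho>sym that by simp
    next
      case 2 then show ?thesis using ze gi \<rho>0 that by simp
    next
      case 3 then show ?thesis using that Qiff by blast
    qed
  qed
  define emb where "emb = gf Q"
  have inv: "Q n emb (emb n)" for n
    unfolding emb_def
  proof (rule gf_induct[where P = "\<lambda>n v. Q n (gf Q) v"])
    fix n v
    assume "Q n (\<lambda>i. if i < n then gf Q i else undefined) v"
    then show "Q n (gf Q) v" using Qr by simp
  next
    fix n
    assume IH: "\<And>i. i < n \<Longrightarrow> Q i (gf Q) (gf Q i)"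
    show "\<exists>v. Q n (\<lambda>i. if i < n then gf Q i else undefined) v"
      unfolding Qr
    proof (cases "n \<in> NX")
      case False then show "\<exists>v. Q n (gf Q) v" using Qiff by blast
    next
      case nN: True
      define I where "I = {i. i < n \<and> i \<in> NX}"
      have "\<exists>u\<in>U. \<forall>i\<in>I. du u (gf Q i) = \<rho> n i"
      proof (rule ext_point[OF UU])
        show "finite I" unfolding I_def by simp
        show "gf Q ` I \<subseteq> U" using IH Qiff unfolding I_def by blast
        show "\<forall>i\<in>I. 0 < \<rho> n i" using \<rho>pos nN unfolding I_def by auto
        have pw': "du (gf Q i) (gf Q j) = \<rho> i j" if "i \<in> I" "j \<in> I" for i j
          using that unfolding I_def by (intro pw) (auto intro: IH)
        show "\<forall>i\<in>I. \<forall>j\<in>I. du (gf Q i) (gf Q j) \<le> max (\<rho> n i) (\<rho> n j)"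
        proof (intro ballI)
          fix i j assume ij: "i \<in> I" "j \<in> I"
          then have "i \<in> NX" "j \<in> NX" unfolding I_def by auto
          then show "du (gf Q i) (gf Q j) \<le> max (\<rho> n i) (\<rho> n j)"
            using pw'[OF ij] \<rho>um1[of i j n] nN by simp
        qed
        show "\<forall>i\<in>I. \<forall>j\<in>I. \<rho> n i \<le> max (du (gf Q i) (gf Q j)) (\<rho> n j)"
        proof (intro ballI)
          fix i j assume ij: "i \<in> I" "j \<in> I"
          then have "i \<in> NX" "j \<in> NX" unfolding I_def by auto
          then show "\<rho> n i \<le> max (du (gf Q i) (gf Q j)) (\<rho> n j)"
            using pw'[OF ij] \<rho>um2[of i j n] nN by simp
        qed
      qed
      then obtain u where "u \<in> U" "\<forall>i\<in>I. du u (gf Q i) = \<rho> n i" by blast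
      then have "Q n (gf Q) u" by (intro Qiff[THEN iffD2]) (auto simp: I_def)
      then show "\<exists>v. Q n (gf Q) v" by blast
    qed
  qed
  define e where "e x = emb (tx x)" for x
  have eU: "e x \<in> U" if "x \<in> X" for x using inv[of "tx x"] txN[OF that] Qiff unfolding e_def by blast
  have eiso: "du (e x) (e x') = De (d x x')" if "x \<in> X" "x' \<in> X" for x x'
    using pw[OF txN[OF that(1)] txN[OF that(2)] inv inv] px_tx that unfolding e_def \<rho>_def by simp
  have "inj_on e X"
  proof (rule inj_onI)
    fix x y assume xy: "x \<in> X" "y \<in> X" "e x = e y"
    then have "du (e x) (e y) = 0" using ze eU by simp
    moreover have "De (d x y) = du (e x) (e y)" using eiso[OF xy(1) xy(2)] by simp
    ultimately have "De (d x y) = 0" by simp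
    then have "d x y = z" using Dpos[OF dD[OF xy(1) xy(2)]] by force
    then show "x = y" using dze xy by simp
  qed
  then show ?thesis using eU eiso by blast
qed


theorem proposition3p21:
  fixes X :: "'a set" and D :: "'d::linorder set" and z :: 'd and d :: "'a \<Rightarrow> 'a \<Rightarrow> 'd"
    and U :: "'u set" and du :: "'u \<Rightarrow> 'u \<Rightarrow> rat"
  assumes "countable_ts_ultrametric X D z d"
    and "rational_urysohn_ultrametric U du"
  shows "\<exists>e De. dc_embedding X D z d U {q. 0 \<le> q} 0 du e De \<and>
                ts_uniformly_continuous X D z d U {q. 0 \<le> q} 0 du e"
proof -
  have metX: "ts_ultrametric X D z d" and cD: "countable D"
    using assms(1) unfolding countable_ts_ultrametric_def by auto
  have zD: "z \<in> D" and zmin: "\<forall>r\<in>D. z \<le> r" using metX unfolding ts_ultrametric_def by auto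
  have dD: "\<And>x y. x \<in> X \<Longrightarrow> y \<in> X \<Longrightarrow> d x y \<in> D" using metX unfolding ts_ultrametric_def by blast
  obtain De :: "'d \<Rightarrow> rat" where De0: "De z = 0" and Demono: "\<forall>r\<in>D. \<forall>s\<in>D. r < s \<longrightarrow> De r < De s"
    and cont: "\<forall>r>0. (\<exists>s\<in>D. z < s \<and> (\<forall>t\<in>D. t < s \<longrightarrow> De t < r)) \<or> (\<forall>t\<in>D. t = z)"
    using De_exists[OF zD zmin cD] by blast
  obtain e where einj: "inj_on e X" and eU: "e ` X \<subseteq> U"
    and eiso: "\<forall>x\<in>X. \<forall>x'\<in>X. du (e x) (e x') = De (d x x')"
    using emb_exists[OF assms(2) assms(1) De0 Demono] by blast
  have Dnn: "0 \<le> De t" if "t \<in> D" for t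
  proof (cases "t = z")
    case False
    then have "z < t" using zmin that by (simp add: order.not_eq_order_implies_strict)
    then show ?thesis using Demono zD that De0 by (metis less_imp_le)
  qed (simp add: De0)
  have dc: "dc_embedding X D z d U {q. 0 \<le> q} 0 du e De"
    unfolding dc_embedding_def using einj eU Dnn Demono De0 eiso by blast
  have uc: "ts_uniformly_continuous X D z d U {q. 0 \<le> q} 0 du e"
    unfolding ts_uniformly_continuous_def
  proof
    fix V assume "V \<in> ts_uniformity U {q. 0 \<le> q} 0 du"
    then obtain F where VU: "V \<subseteq> U \<times> U" and fF: "finite F" and FD: "F \<subseteq> {q. 0 \<le> q} - {0}"
      and FV: "(U \<times> U) \<inter> (\<Inter>r\<in>F. ball_entourage U du r) \<subseteq> V"
      unfolding ts_uniformity_def by blast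
    define W where "W = {(x, x'). x \<in> X \<and> x' \<in> X \<and> (e x, e x') \<in> V}"
    have WX: "W \<subseteq> X \<times> X" unfolding W_def by auto
    have inW: "(x, x') \<in> W" if "x \<in> X" "x' \<in> X" "\<forall>f\<in>F. De (d x x') < f" for x x'
    proof -
      have "(e x, e x') \<in> (U \<times> U) \<inter> (\<Inter>r\<in>F. ball_entourage U du r)"
        using that eU eiso unfolding ball_entourage_def by auto
      then show ?thesis using FV that unfolding W_def by auto
    qed
    have "\<exists>F'. finite F' \<and> F' \<subseteq> D - {z} \<and> (X \<times> X) \<inter> (\<Inter>r\<in>F'. ball_entourage X d r) \<subseteq> W"
    proof (cases "F = {}")
      case True
      then show ?thesis using inW by (intro exI[of _ "{}"]) auto
    next
      case False
      define r where "r = Min F"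
      have rF: "r \<in> F" using False fF unfolding r_def by simp
      have r0: "0 < r" using rF FD by auto
      have rle: "\<forall>f\<in>F. r \<le> f" using fF unfolding r_def by simp
      from cont r0 have "(\<exists>s\<in>D. z < s \<and> (\<forall>t\<in>D. t < s \<longrightarrow> De t < r)) \<or> (\<forall>t\<in>D. t = z)" by blast
      then show ?thesis
      proof
        assume "\<exists>s\<in>D. z < s \<and> (\<forall>t\<in>D. t < s \<longrightarrow> De t < r)"
        then obtain s where s: "s \<in> D" "z < s" "\<forall>t\<in>D. t < s \<longrightarrow> De t < r" by blast
        have "(X \<times> X) \<inter> (\<Inter>r\<in>{s}. ball_entourage X d r) \<subseteq> W"
        proof
          fix p assume "p \<in> (X \<times> X) \<inter> (\<Inter>r\<in>{s}. ball_entourage X d r)"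
          then obtain x x' where p: "p = (x, x')" "x \<in> X" "x' \<in> X" "d x x' < s"
            unfolding ball_entourage_def by auto
          then have "De (d x x') < r" using s dD by blast
          then have "\<forall>f\<in>F. De (d x x') < f" using rle by (meson less_le_trans)
          then show "p \<in> W" using inW p by blast
        qed
        then show ?thesis using s by (intro exI[of _ "{s}"]) auto
      next
        assume allz: "\<forall>t\<in>D. t = z"
        have "(X \<times> X) \<inter> (\<Inter>r\<in>{}. ball_entourage X d r) \<subseteq> W"
        proof
          fix p assume "p \<in> (X \<times> X) \<inter> (\<Inter>r\<in>{}. ball_entourage X d r)"
          then obtain x x' where p: "p = (x, x')" "x \<in> X" "x' \<in> X" by auto
          then have "De (d x x') = 0" using allz dD De0 by metis
          then have "\<forall>f\<in>F. De (d x x') < f" using rle r0 by (metis less_le_trans)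
          then show "p \<in> W" using inW p by blast
        qed
        then show ?thesis by (intro exI[of _ "{}"]) auto
      qed
    qed
    then show "{(x, x'). x \<in> X \<and> x' \<in> X \<and> (e x, e x') \<in> V} \<in> ts_uniformity X D z d"
      using WX unfolding W_def ts_uniformity_def by blast
  qed
  show ?thesis using dc uc by blast
qed

end
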